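(* Let $K\subset\mathbb{R}^n$ be a proper cone. (i) If $\emptyset\ne\mathcal{M}\subset\pi(K)$, then the convex hull $\operatorname{conv}\mathcal{M}$ contains a $K$-irreducible element if and only if for every nontrivial face $F$ of $K$ there exists $A\in\mathcal{M}$ such that $AF\not\subset F$. (ii) If $\emptyset\ne\mathcal{M}\subset\pi(K)+\Lambda$ is bounded, where $\Lambda=\{\lambda I:\lambda\in\mathbb{R}\}$, then $\operatorname{conv}\mathcal{M}$ contains an irreducible exponentially $K$-nonnegative element (i.e. an element $A$ for which no nontrivial face $F$ of $K$ has $A\,\operatorname{span}F\subset\operatorname{span}F$) if and only if for every nontrivial face $F$ of $K$ there exists $A\in\mathcal{M}$ such that $A\,\operatorname{span}F\not\subset\operatorname{span}F$.
   Context: A proper cone $K\subset\mathbb{R}^n$ is a nonempty set with $rK\subset K$ for all $r>0$ which is convex, pointed ($K\cap(-K)=\{0\}$), closed and has nonempty interior. Write $x\ge_K y$ if $x-y\in K$. A face of $K$ is a cone $F\subseteq K$ such that $x\in F$ and $x\ge_K y\ge_K 0$ imply $y\in F$; the faces $\{0\}$ and $K$ are trivial. $\pi(K)=\{A\in\mathbb{R}^{n\times n}: AK\subset K\}$; $A\in\pi(K)$ is $K$-irreducible if there is no nontrivial face $F$ of $K$ with $AF\subset F$. A matrix $A$ is exponentially $K$-nonnegative if $e^{At}K\subset K$ for all $t\ge0$ (every element of $\pi(K)+\Lambda$ has this property). *)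

theory Defs
  imports "HOL-Analysis.Analysis"
begin

definition proper_cone :: "(real^'n) set \<Rightarrow> bool" where
  "proper_cone K \<longleftrightarrow> K \<noteq> {} \<and> (\<forall>r>0. \<forall>x\<in>K. r *\<^sub>R x \<in> K) \<and> convex K
     \<and> K \<inter> uminus ` K = {0} \<and> closed K \<and> interior K \<noteq> {}"

definition cone_ge :: "(real^'n) set \<Rightarrow> real^'n \<Rightarrow> real^'n \<Rightarrow> bool" where
  "cone_ge K x y \<longleftrightarrow> x - y \<in> K"

definition face_of_cone :: "(real^'n) set \<Rightarrow> (real^'n) set \<Rightarrow> bool" where
  "face_of_cone K F \<longleftrightarrow> F \<noteq> {} \<and> (\<forall>r>0. \<forall>x\<in>F. r *\<^sub>R x \<in> F) \<and> convex F \<and> F \<subseteq> K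
     \<and> (\<forall>x y. x \<in> F \<and> cone_ge K x y \<and> cone_ge K y 0 \<longrightarrow> y \<in> F)"

definition nontrivial_face :: "(real^'n) set \<Rightarrow> (real^'n) set \<Rightarrow> bool" where
  "nontrivial_face K F \<longleftrightarrow> face_of_cone K F \<and> F \<noteq> {0} \<and> F \<noteq> K"

definition pi_cone :: "(real^'n) set \<Rightarrow> (real^'n^'n) set" where
  "pi_cone K = {A. \<forall>x\<in>K. A *v x \<in> K}"

definition K_irreducible :: "(real^'n) set \<Rightarrow> real^'n^'n \<Rightarrow> bool" where
  "K_irreducible K A \<longleftrightarrow> A \<in> pi_cone K \<and>
     \<not> (\<exists>F. nontrivial_face K F \<and> (\<lambda>x. A *v x) ` F \<subseteq> F)"

definition mat_pow :: "real^'n^'n \<Rightarrow> nat \<Rightarrow> real^'n^'n" where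
  "mat_pow A k = ((\<lambda>B. A ** B) ^^ k) (mat 1)"

definition mat_exp :: "real^'n^'n \<Rightarrow> real^'n^'n" where
  "mat_exp A = (\<Sum>k. (1 / fact k) *\<^sub>R mat_pow A k)"

definition exp_K_nonneg :: "(real^'n) set \<Rightarrow> real^'n^'n \<Rightarrow> bool" where
  "exp_K_nonneg K A \<longleftrightarrow> (\<forall>t\<ge>0. \<forall>x\<in>K. mat_exp (t *\<^sub>R A) *v x \<in> K)"

definition Lambda_scalar :: "(real^'n^'n) set" where
  "Lambda_scalar = {l *\<^sub>R mat 1 | l. True}"

end

theory Submission
  imports Defs
begin


lemma mvsum: "finite S \<Longrightarrow> (sum f S) *v (x::real^'n) = sum (\<lambda>i. f i *v x) S"
  for f :: "'a \<Rightarrow> real^'n^'m"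
  by (induction S rule: finite_induct) (auto simp: matrix_vector_mult_add_rdistrib)

context fixes K :: "(real^'n) set" assumes pc: "proper_cone K"
begin

lemma K0: "0 \<in> K"
proof -
  have "K \<inter> uminus ` K = {0}" using pc unfolding proper_cone_def by blast
  thus ?thesis by blast
qed

lemma Kpt: "x \<in> K \<Longrightarrow> - x \<in> K \<Longrightarrow> x = 0"
proof -
  assume a: "x \<in> K" "- x \<in> K"
  have "K \<inter> uminus ` K = {0}" using pc unfolding proper_cone_def by blast
  moreover have "x \<in> uminus ` K" using a(2) by (metis image_eqI minus_minus)
  ultimately show ?thesis using a(1) by blast
qed

lemma Ksc: "r \<ge> 0 \<Longrightarrow> x \<in> K \<Longrightarrow> r *\<^sub>R x \<in> K"
  using pc K0 unfolding proper_cone_def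
  by (metis less_eq_real_def scaleR_eq_0_iff)

lemma Kconv: "convex K" using pc unfolding proper_cone_def by blast
lemma Kclosed: "closed K" using pc unfolding proper_cone_def by blast

lemma Kadd: "x \<in> K \<Longrightarrow> y \<in> K \<Longrightarrow> x + y \<in> K"
proof -
  assume a: "x \<in> K" "y \<in> K"
  have "(1/2) *\<^sub>R x + (1/2) *\<^sub>R y \<in> K" using Kconv a unfolding convex_def by auto
  hence "2 *\<^sub>R ((1/2) *\<^sub>R x + (1/2) *\<^sub>R y) \<in> K" by (rule Ksc[rotated]) simp
  thus ?thesis by (simp add: scaleR_add_right)
qed

lemma Ksum: "finite S \<Longrightarrow> (\<And>i. i \<in> S \<Longrightarrow> f i \<in> K) \<Longrightarrow> sum f S \<in> K"
  by (induction S rule: finite_induct) (auto intro: Kadd K0)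

lemma piK_sum: "finite S \<Longrightarrow> S \<subseteq> pi_cone K \<Longrightarrow> sum (\<lambda>A. A) S \<in> pi_cone K"
  unfolding pi_cone_def
  by (auto simp: mvsum intro!: Ksum)

lemma face_props:
  assumes "face_of_cone K F"
  shows "F \<subseteq> K" "0 \<in> F" "\<And>x r. x \<in> F \<Longrightarrow> r \<ge> 0 \<Longrightarrow> r *\<^sub>R x \<in> F"
    "\<And>x y. x \<in> F \<Longrightarrow> y \<in> F \<Longrightarrow> x + y \<in> F"
    "\<And>x y. x \<in> F \<Longrightarrow> x - y \<in> K \<Longrightarrow> y \<in> K \<Longrightarrow> y \<in> F"
proof -
  show FK: "F \<subseteq> K" using assms unfolding face_of_cone_def by blast
  show her: "\<And>x y. x \<in> F \<Longrightarrow> x - y \<in> K \<Longrightarrow> y \<in> K \<Longrightarrow> y \<in> F"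
    using assms unfolding face_of_cone_def cone_ge_def by auto
  obtain a where a: "a \<in> F" using assms unfolding face_of_cone_def by blast
  show F0: "0 \<in> F" using her[OF a, of 0] a FK K0 by auto
  show sc: "\<And>x r. x \<in> F \<Longrightarrow> r \<ge> 0 \<Longrightarrow> r *\<^sub>R x \<in> F"
    using assms F0 unfolding face_of_cone_def by (metis less_eq_real_def scaleR_zero_left)
  show "\<And>x y. x \<in> F \<Longrightarrow> y \<in> F \<Longrightarrow> x + y \<in> F"
  proof -
    fix x y assume xy: "x \<in> F" "y \<in> F"
    have "(1/2) *\<^sub>R x + (1/2) *\<^sub>R y \<in> F" using assms xy unfolding face_of_cone_def convex_def by auto
    hence "2 *\<^sub>R ((1/2) *\<^sub>R x + (1/2) *\<^sub>R y) \<in> F" by (rule sc) simp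
    thus "x + y \<in> F" by (simp add: scaleR_add_right)
  qed
qed

lemma face_span:
  assumes F: "face_of_cone K F" and x: "x \<in> K" "x \<in> span F"
  shows "x \<in> F"
proof -
  note fp = face_props[OF F]
  have "subspace {v. \<exists>a b. a \<in> F \<and> b \<in> F \<and> v = a - b}"
    unfolding subspace_def
  proof (intro conjI allI impI ballI)
    show "0 \<in> {v. \<exists>a b. a \<in> F \<and> b \<in> F \<and> v = a - b}" using fp(2) by force
  next
    fix u v assume "u \<in> {v. \<exists>a b. a \<in> F \<and> b \<in> F \<and> v = a - b}" "v \<in> {v. \<exists>a b. a \<in> F \<and> b \<in> F \<and> v = a - b}"
    then obtain a b c d where "a \<in> F" "b \<in> F" "c \<in> F" "d \<in> F" "u = a - b" "v = c - d" by blast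
    thus "u + v \<in> {v. \<exists>a b. a \<in> F \<and> b \<in> F \<and> v = a - b}"
      by (intro CollectI exI[of _ "a + c"] exI[of _ "b + d"]) (auto intro: fp(4))
  next
    fix r :: real and u assume "u \<in> {v. \<exists>a b. a \<in> F \<and> b \<in> F \<and> v = a - b}"
    then obtain a b where ab: "a \<in> F" "b \<in> F" "u = a - b" by blast
    show "r *\<^sub>R u \<in> {v. \<exists>a b. a \<in> F \<and> b \<in> F \<and> v = a - b}"
    proof (cases "r \<ge> 0")
      case True thus ?thesis using ab fp(3)
        by (intro CollectI exI[of _ "r *\<^sub>R a"] exI[of _ "r *\<^sub>R b"]) (auto simp: scaleR_diff_right)
    next
      case False thus ?thesis using ab fp(3)[of _ "-r"]
        by (intro CollectI exI[of _ "(-r) *\<^sub>R b"] exI[of _ "(-r) *\<^sub>R a"]) (auto simp: scaleR_diff_right)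
    qed
  qed
  moreover have "F \<subseteq> {v. \<exists>a b. a \<in> F \<and> b \<in> F \<and> v = a - b}" using fp(2) by force
  ultimately have "x \<in> {v. \<exists>a b. a \<in> F \<and> b \<in> F \<and> v = a - b}"
    using x(2) span_minimal by blast
  then obtain a b where ab: "a \<in> F" "b \<in> F" "x = a - b" by blast
  have "a - x \<in> K" using ab fp(1) by auto
  thus ?thesis using fp(5)[OF ab(1)] x(1) by blast
qed

lemma int_add: "z \<in> interior K \<Longrightarrow> k \<in> K \<Longrightarrow> z + k \<in> interior K"
proof -
  assume z: "z \<in> interior K" and k: "k \<in> K"
  obtain e where e: "e > 0" "ball z e \<subseteq> K" using z mem_interior by blast
  have "ball (z + k) e \<subseteq> K"
  proof
    fix w assume "w \<in> ball (z + k) e"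
    hence "w - k \<in> ball z e" by (simp add: dist_norm algebra_simps)
    hence "w - k \<in> K" using e by blast
    from Kadd[OF this k] show "w \<in> K" by simp
  qed
  thus ?thesis using e mem_interior by blast
qed

lemma int_scale: "z \<in> interior K \<Longrightarrow> c > 0 \<Longrightarrow> c *\<^sub>R z \<in> interior K"
proof -
  assume z: "z \<in> interior K" and c: "c > 0"
  obtain e where e: "e > 0" "ball z e \<subseteq> K" using z mem_interior by blast
  have "ball (c *\<^sub>R z) (c * e) \<subseteq> K"
  proof
    fix w assume "w \<in> ball (c *\<^sub>R z) (c * e)"
    hence "dist (c *\<^sub>R z) w < c * e" by simp
    hence "dist z ((1/c) *\<^sub>R w) < e"
    proof -
      have "dist (c *\<^sub>R z) w = c * dist z ((1/c) *\<^sub>R w)"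
        proof -
        have "c *\<^sub>R z - w = c *\<^sub>R (z - (1/c) *\<^sub>R w)" using c by (simp add: scaleR_diff_right)
        thus ?thesis using c by (simp add: dist_norm)
      qed
      thus ?thesis using \<open>dist (c *\<^sub>R z) w < c * e\<close> c by simp
    qed
    hence "(1/c) *\<^sub>R w \<in> K" using e by auto
    from Ksc[OF _ this, of c] c show "w \<in> K" by simp
  qed
  thus ?thesis using e c mem_interior by (metis mult_pos_pos)
qed

lemma face_int:
  assumes F: "face_of_cone K F" and z: "z \<in> F" "z \<in> interior K"
  shows "F = K"
proof
  note fp = face_props[OF F]
  show "F \<subseteq> K" by (rule fp(1))
  show "K \<subseteq> F"
  proof
    fix y assume y: "y \<in> K"
    obtain e where e: "e > 0" "ball z e \<subseteq> K" using z mem_interior by blast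
    define t where "t = e / (2 * (norm y + 1))"
    have pos: "0 < 2 * (norm y + 1)" by (smt (verit) norm_ge_zero)
    hence t: "t > 0" using e unfolding t_def by simp
    have "t * norm y < e"
    proof -
      have "t * norm y \<le> t * (norm y + 1)" using t by simp
      also have "\<dots> = e / 2" using pos unfolding t_def by (simp add: field_simps)
      finally show ?thesis using e by simp
    qed
    hence "z - t *\<^sub>R y \<in> ball z e" using t by (simp add: dist_norm)
    hence "z - t *\<^sub>R y \<in> K" using e by blast
    hence "t *\<^sub>R y \<in> F" using fp(5)[OF z(1)] Ksc[OF _ y, of t] t by simp
    from fp(3)[OF this, of "1/t"] t show "y \<in> F" by simp
  qed
qed

end


definition gen :: "(real^'n) set \<Rightarrow> real^'n \<Rightarrow> (real^'n) set" where
  "gen K y = {w\<in>K. \<exists>c\<ge>0. c *\<^sub>R y - w \<in> K}"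

definition stepf :: "(real^'n^'n) set \<Rightarrow> real^'n \<Rightarrow> real^'n" where
  "stepf S v = v + (\<Sum>S) *v v"

context fixes K :: "(real^'n) set" assumes pc: "proper_cone K"
begin

lemmas K0_p2 = K0[OF pc] and Kadd_p2 = Kadd[OF pc] and Ksc_p2 = Ksc[OF pc] and Ksum_p2 = Ksum[OF pc]
  and piK_sum_p2 = piK_sum[OF pc] and face_props_p2 = face_props[OF pc] and face_span_p2 = face_span[OF pc]
  and int_add_p2 = int_add[OF pc] and int_scale_p2 = int_scale[OF pc] and face_int_p2 = face_int[OF pc]
  and Kconv_p2 = Kconv[OF pc] and Kpt_p2 = Kpt[OF pc] and Kclosed_p2 = Kclosed[OF pc]

lemma gen_self: "y \<in> K \<Longrightarrow> y \<in> gen K y"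
  unfolding gen_def by (auto intro!: exI[of _ 1] K0_p2)

lemma gen_face: assumes y: "y \<in> K" shows "face_of_cone K (gen K y)"
  unfolding face_of_cone_def
proof (intro conjI allI impI ballI)
  show "gen K y \<noteq> {}" using gen_self[OF y] by blast
  show "gen K y \<subseteq> K" unfolding gen_def by blast
next
  fix r :: real and x assume r: "r > 0" and x: "x \<in> gen K y"
  then obtain c where c: "c \<ge> 0" "c *\<^sub>R y - x \<in> K" "x \<in> K" unfolding gen_def by blast
  have "(r*c) *\<^sub>R y - r *\<^sub>R x = r *\<^sub>R (c *\<^sub>R y - x)" by (simp add: scaleR_diff_right)
  thus "r *\<^sub>R x \<in> gen K y" unfolding gen_def using c r Ksc_p2
    by (auto intro!: exI[of _ "r*c"])
next
  show "convex (gen K y)" unfolding convex_def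
  proof (intro ballI allI impI)
    fix x z and u v :: real assume x: "x \<in> gen K y" and z: "z \<in> gen K y" and uv: "0 \<le> u" "0 \<le> v" "u + v = 1"
    obtain c where c: "c \<ge> 0" "c *\<^sub>R y - x \<in> K" "x \<in> K" using x unfolding gen_def by blast
    obtain d where d: "d \<ge> 0" "d *\<^sub>R y - z \<in> K" "z \<in> K" using z unfolding gen_def by blast
    have e: "(u * c + v * d) *\<^sub>R y - (u *\<^sub>R x + v *\<^sub>R z) = u *\<^sub>R (c *\<^sub>R y - x) + v *\<^sub>R (d *\<^sub>R y - z)"
      by (simp add: algebra_simps)
    have "u *\<^sub>R x + v *\<^sub>R z \<in> K" using Kconv_p2 c d uv unfolding convex_def by blast
    moreover have "u *\<^sub>R (c *\<^sub>R y - x) + v *\<^sub>R (d *\<^sub>R y - z) \<in> K"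
      using c d uv by (intro Kadd_p2 Ksc_p2) auto
    ultimately show "u *\<^sub>R x + v *\<^sub>R z \<in> gen K y" unfolding gen_def using e c d uv
      by (auto intro!: exI[of _ "u * c + v * d"])
  qed
next
  fix x w assume "x \<in> gen K y \<and> cone_ge K x w \<and> cone_ge K w 0"
  hence x: "x \<in> gen K y" and xw: "x - w \<in> K" and w: "w \<in> K" unfolding cone_ge_def by auto
  obtain c where c: "c \<ge> 0" "c *\<^sub>R y - x \<in> K" using x unfolding gen_def by blast
  have "c *\<^sub>R y - w = (c *\<^sub>R y - x) + (x - w)" by simp
  hence "c *\<^sub>R y - w \<in> K" using c xw Kadd_p2 by metis
  thus "w \<in> gen K y" unfolding gen_def using c w by auto
qed

lemma gen_int: assumes y: "y \<in> K" and g: "gen K y = K" shows "y \<in> interior K"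
proof -
  obtain z where z: "z \<in> interior K" using pc unfolding proper_cone_def by blast
  hence "z \<in> gen K y" using g interior_subset by blast
  then obtain c where c: "c \<ge> 0" "c *\<^sub>R y - z \<in> K" unfolding gen_def by blast
  have cy: "c *\<^sub>R y \<in> interior K" using int_add_p2[OF z c(2)] by simp
  have "c \<noteq> 0"
  proof
    assume "c = 0"
    hence "0 \<in> interior K" using cy by simp
    then obtain e where e: "e > 0" "ball 0 e \<subseteq> K" using mem_interior by blast
    obtain v :: "real^'n" where v: "v \<noteq> 0" using zero_neq_one[where 'a="real^'n"] by blast
    define w where "w = (e / (2 * norm v)) *\<^sub>R v"
    have nw: "norm w = e / 2" using v e unfolding w_def by simp
    hence "w \<in> ball 0 e" "-w \<in> ball 0 e" using e by auto
    hence "w = 0" using e Kpt_p2 by blast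
    thus False using nw e by simp
  qed
  hence "(1/c) *\<^sub>R (c *\<^sub>R y) \<in> interior K" using int_scale_p2[OF cy, of "1/c"] c by simp
  thus ?thesis using \<open>c \<noteq> 0\<close> by simp
qed

lemma stepf_K: "finite S \<Longrightarrow> S \<subseteq> pi_cone K \<Longrightarrow> v \<in> K \<Longrightarrow> stepf S v \<in> K"
  unfolding stepf_def using piK_sum_p2 unfolding pi_cone_def by (auto intro: Kadd_p2)

lemma stepf_mono:
  assumes S: "finite S" "S \<subseteq> pi_cone K" and T: "T \<subseteq> S" and ab: "a - b \<in> K" "b \<in> K"
  shows "(stepf S ^^ N) a - (stepf T ^^ N) b \<in> K \<and> (stepf T ^^ N) b \<in> K"
proof (induction N)
  case 0 thus ?case using ab by simp
next
  case (Suc N)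
  define a' where "a' = (stepf S ^^ N) a"
  define b' where "b' = (stepf T ^^ N) b"
  have ab': "a' - b' \<in> K" "b' \<in> K" using Suc unfolding a'_def b'_def by auto
  have a': "a' \<in> K" using Kadd_p2[OF ab'] by simp
  have fT: "finite T" using S T finite_subset by blast
  have sd: "(\<Sum>S) = (\<Sum>(S - T)) + (\<Sum>T)" using sum.subset_diff[OF T S(1), of "\<lambda>x. x"] by simp
  have pST: "(\<Sum>(S - T)) \<in> pi_cone K" using piK_sum_p2 S by (meson Diff_subset finite_Diff subset_trans)
  have pT: "(\<Sum>T) \<in> pi_cone K" using piK_sum_p2 fT S T by blast
  have eq: "stepf S a' - stepf T b' = (a' - b') + ((\<Sum>(S - T)) *v a' + (\<Sum>T) *v (a' - b'))"
    unfolding stepf_def sd by (simp add: algebra_simps matrix_vector_mult_add_rdistrib)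
  have "stepf S a' - stepf T b' \<in> K" unfolding eq using pST pT a' ab' unfolding pi_cone_def
    by (intro Kadd_p2) auto
  moreover have "stepf T b' \<in> K" using stepf_K[OF fT _ ab'(2)] S T by blast
  ultimately show ?case unfolding a'_def b'_def by simp
qed

lemma stepf_int:
  assumes S: "finite S" "S \<subseteq> pi_cone K" and v: "v \<in> interior K"
  shows "(stepf S ^^ d) v \<in> interior K"
proof (induction d)
  case 0 thus ?case using v by simp
next
  case (Suc d)
  have "(\<Sum>S) *v (stepf S ^^ d) v \<in> K" using piK_sum_p2[OF S] Suc interior_subset
    unfolding pi_cone_def by blast
  thus ?case using int_add_p2[OF Suc] unfolding stepf_def by simp
qed

end


lemma stepf_bl: "bounded_linear (stepf S ^^ N)"
proof (induction N)
  case 0 thus ?case by (simp add: id_def)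
next
  case (Suc N)
  have bl: "bounded_linear (stepf S)" unfolding stepf_def
    by (intro bounded_linear_add bounded_linear_ident matrix_vector_mul_bounded_linear)
  have "bounded_linear (\<lambda>x. stepf S ((stepf S ^^ N) x))"
    by (rule bounded_linear_compose[OF bl Suc])
  thus ?case by (simp add: o_def)
qed

context fixes K :: "(real^'n) set" assumes pc: "proper_cone K"
begin

lemmas K0_p3 = K0[OF pc] and Kadd_p3 = Kadd[OF pc] and Ksc_p3 = Ksc[OF pc] and Ksum_p3 = Ksum[OF pc]
  and piK_sum_p3 = piK_sum[OF pc] and face_props_p3 = face_props[OF pc] and face_span_p3 = face_span[OF pc]
  and int_add_p3 = int_add[OF pc] and int_scale_p3 = int_scale[OF pc] and face_int_p3 = face_int[OF pc]
  and Kconv_p3 = Kconv[OF pc] and Kpt_p3 = Kpt[OF pc] and Kclosed_p3 = Kclosed[OF pc]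
  and gen_self_p3 = gen_self[OF pc] and gen_face_p3 = gen_face[OF pc] and gen_int_p3 = gen_int[OF pc]
  and stepf_K_p3 = stepf_K[OF pc] and stepf_mono_p3 = stepf_mono[OF pc] and stepf_int_p3 = stepf_int[OF pc]

lemma local_irr:
  assumes M: "M \<subseteq> pi_cone K"
    and H: "\<forall>F. nontrivial_face K F \<longrightarrow> (\<exists>A\<in>M. \<not> ((\<lambda>x. A *v x) ` F \<subseteq> F))"
  shows "y \<in> K \<Longrightarrow> y \<noteq> 0 \<Longrightarrow> \<exists>S N. finite S \<and> S \<subseteq> M \<and> (stepf S ^^ N) y \<in> interior K"
proof (induction "CARD('n) - dim (gen K y)" arbitrary: y rule: less_induct)
  case less
  show ?case
  proof (cases "gen K y = K")
    case True thus ?thesis using gen_int_p3[OF less(2)] by (intro exI[of _ "{}"] exI[of _ 0]) auto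
  next
    case False
    have nt: "nontrivial_face K (gen K y)" unfolding nontrivial_face_def
      using gen_face_p3[OF less(2)] gen_self_p3[OF less(2)] less(3) False by auto
    then obtain A where A: "A \<in> M" "\<not> ((\<lambda>x. A *v x) ` gen K y \<subseteq> gen K y)" using H by blast
    then obtain w where w: "w \<in> gen K y" "A *v w \<notin> gen K y" by blast
    have AK: "\<And>v. v \<in> K \<Longrightarrow> A *v v \<in> K" using A M unfolding pi_cone_def by blast
    define z where "z = y + A *v y"
    have zK: "z \<in> K" unfolding z_def using less(2) AK Kadd_p3 by blast
    have z0: "z \<noteq> 0"
    proof
      assume "z = 0"
      hence "- y = A *v y" unfolding z_def by (simp add: add_eq_0_iff)
      hence "- y \<in> K" using AK less(2) by simp
      thus False using Kpt_p3 less(2,3) by blast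
    qed
    have sub: "gen K y \<subseteq> gen K z"
    proof
      fix v assume "v \<in> gen K y"
      then obtain c where c: "c \<ge> 0" "c *\<^sub>R y - v \<in> K" "v \<in> K" unfolding gen_def by blast
      have "c *\<^sub>R z - v = (c *\<^sub>R y - v) + c *\<^sub>R (A *v y)" unfolding z_def by (simp add: algebra_simps)
      hence "c *\<^sub>R z - v \<in> K" using c AK less(2) Kadd_p3 Ksc_p3 by metis
      thus "v \<in> gen K z" unfolding gen_def using c by auto
    qed
    have Aw: "A *v w \<in> gen K z"
    proof -
      obtain c where c: "c \<ge> 0" "c *\<^sub>R y - w \<in> K" "w \<in> K" using w unfolding gen_def by blast
      have "c *\<^sub>R z - A *v w = c *\<^sub>R y + A *v (c *\<^sub>R y - w)" unfolding z_def
        by (simp add: algebra_simps matrix_vector_mult_scaleR)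
      hence "c *\<^sub>R z - A *v w \<in> K" using c AK less(2) Kadd_p3 Ksc_p3 by metis
      thus ?thesis unfolding gen_def using c AK by auto
    qed
    have dlt: "dim (gen K y) < dim (gen K z)"
    proof (rule ccontr)
      assume "\<not> ?thesis"
      hence "dim (span (gen K z)) \<le> dim (span (gen K y))" by simp
      hence "span (gen K y) = span (gen K z)"
        using subspace_dim_equal[OF subspace_span subspace_span span_mono[OF sub]] by simp
      moreover have "A *v w \<in> span (gen K z)" using Aw span_base by blast
      moreover have "A *v w \<in> K" using Aw unfolding gen_def by blast
      ultimately have "A *v w \<in> gen K y" using face_span_p3[OF gen_face_p3[OF less(2)]] by simp
      thus False using w by blast
    qed
    have "dim (gen K z) \<le> CARD('n)" by (rule dim_subset_UNIV_cart)
    hence "CARD('n) - dim (gen K z) < CARD('n) - dim (gen K y)" using dlt by linarith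
    then obtain S0 N0 where S0: "finite S0" "S0 \<subseteq> M" "(stepf S0 ^^ N0) z \<in> interior K"
      using less(1) zK z0 by blast
    define S where "S = insert A S0"
    have S: "finite S" "S \<subseteq> M" "S \<subseteq> pi_cone K" using S0 A M unfolding S_def by auto
    have sS: "(\<Sum>S) = A + (\<Sum>(S0 - {A}))" unfolding S_def using sum.insert_remove[OF S0(1), of "\<lambda>x. x" A] by simp
    have "(\<Sum>(S0 - {A})) \<in> pi_cone K" using piK_sum_p3 S0 M by (meson Diff_subset finite_Diff subset_trans)
    hence d1: "stepf S y - z \<in> K" unfolding stepf_def z_def sS using less(2)
      by (simp add: matrix_vector_mult_add_rdistrib pi_cone_def)
    have "(stepf S ^^ N0) (stepf S y) - (stepf S0 ^^ N0) z \<in> K"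
      using stepf_mono_p3[OF S(1,3) _ d1 zK] unfolding S_def by blast
    hence "(stepf S ^^ N0) (stepf S y) \<in> interior K" using int_add_p3[OF S0(3)] by (metis add.commute diff_add_cancel)
    hence "(stepf S ^^ Suc N0) y \<in> interior K" by (simp only: funpow_Suc_right o_apply)
    thus ?thesis using S by blast
  qed
qed

end


context fixes K :: "(real^'n) set" assumes pc: "proper_cone K"
begin

lemmas K0_p4 = K0[OF pc] and Kadd_p4 = Kadd[OF pc] and Ksc_p4 = Ksc[OF pc]
  and piK_sum_p4 = piK_sum[OF pc] and face_props_p4 = face_props[OF pc]
  and int_add_p4 = int_add[OF pc] and int_scale_p4 = int_scale[OF pc] and face_int_p4 = face_int[OF pc]
  and Kclosed_p4 = Kclosed[OF pc]
  and stepf_K_p4 = stepf_K[OF pc] and stepf_mono_p4 = stepf_mono[OF pc] and stepf_int_p4 = stepf_int[OF pc]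
  and local_irr_p4 = local_irr[OF pc]

lemma core:
  assumes M: "M \<subseteq> pi_cone K" "M \<noteq> {}"
    and H: "\<forall>F. nontrivial_face K F \<longrightarrow> (\<exists>A\<in>M. \<not> ((\<lambda>x. A *v x) ` F \<subseteq> F))"
  shows "\<exists>S. finite S \<and> S \<noteq> {} \<and> S \<subseteq> M \<and>
     (\<forall>F. nontrivial_face K F \<longrightarrow> \<not> ((\<lambda>x. (\<Sum>S) *v x) ` F \<subseteq> F))"
proof -
  define C where "C = K \<inter> sphere 0 1"
  have cC: "compact C" unfolding C_def by (intro closed_Int_compact Kclosed_p4 compact_sphere)
  have "\<forall>y\<in>C. \<exists>p. finite (fst p) \<and> fst p \<subseteq> M \<and> (stepf (fst p) ^^ snd p) y \<in> interior K"
  proof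
    fix y assume "y \<in> C"
    hence "y \<in> K" "y \<noteq> 0" unfolding C_def by auto
    then obtain S N where "finite S \<and> S \<subseteq> M \<and> (stepf S ^^ N) y \<in> interior K"
      using local_irr_p4[OF M(1) H] by blast
    thus "\<exists>p. finite (fst p) \<and> fst p \<subseteq> M \<and> (stepf (fst p) ^^ snd p) y \<in> interior K"
      by (intro exI[of _ "(S, N)"]) simp
  qed
  then obtain f where f: "\<forall>y\<in>C. finite (fst (f y)) \<and> fst (f y) \<subseteq> M \<and> (stepf (fst (f y)) ^^ snd (f y)) y \<in> interior K"
    by (rule bchoice[elim_format]) blast
  define SS where "SS y = fst (f y)" for y
  define NN where "NN y = snd (f y)" for y
  have SS: "\<And>y. y \<in> C \<Longrightarrow> finite (SS y) \<and> SS y \<subseteq> M \<and> (stepf (SS y) ^^ NN y) y \<in> interior K"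
    using f unfolding SS_def NN_def by blast
  define U where "U y = (stepf (SS y) ^^ NN y) -` interior K" for y
  have opn: "\<And>y. y \<in> C \<Longrightarrow> open (U y)" unfolding U_def
    by (intro continuous_open_vimage open_interior linear_continuous_at stepf_bl)
  have cov: "C \<subseteq> (\<Union>y\<in>C. U y)" using SS unfolding U_def by blast
  obtain C' where C': "C' \<subseteq> C" "finite C'" "C \<subseteq> (\<Union>y\<in>C'. U y)"
    using compactE_image[OF cC opn cov] by blast
  obtain A0 where A0: "A0 \<in> M" using M by blast
  define S where "S = insert A0 (\<Union>y\<in>C'. SS y)"
  define N where "N = (\<Sum>y\<in>C'. NN y)"
  have S3: "finite S" "S \<noteq> {}" "S \<subseteq> M"
  proof -
    have "\<forall>y\<in>C'. finite (SS y) \<and> SS y \<subseteq> M" using SS C'(1) by blast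
    thus "finite S" "S \<noteq> {}" "S \<subseteq> M" unfolding S_def using C'(2) A0 by auto
  qed
  have S: "finite S" "S \<noteq> {}" "S \<subseteq> M" "S \<subseteq> pi_cone K" using S3 M(1) by auto
  have good: "(stepf S ^^ N) y \<in> interior K" if y: "y \<in> K" "y \<noteq> 0" for y
  proof -
    define y' where "y' = (1 / norm y) *\<^sub>R y"
    have y'C: "y' \<in> C" unfolding C_def y'_def using y Ksc_p4 by auto
    then obtain y0 where y0: "y0 \<in> C'" "y' \<in> U y0" using C' by blast
    have i0: "(stepf (SS y0) ^^ NN y0) y' \<in> interior K" using y0 unfolding U_def by blast
    have y'K: "y' \<in> K" using y'C unfolding C_def by blast
    have "SS y0 \<subseteq> S" using y0 unfolding S_def by blast
    hence "(stepf S ^^ NN y0) y' - (stepf (SS y0) ^^ NN y0) y' \<in> K"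
      using stepf_mono_p4[OF S(1,4), of "SS y0" y' y'] y'K K0_p4 by auto
    hence i1: "(stepf S ^^ NN y0) y' \<in> interior K" using int_add_p4[OF i0] by (metis add.commute diff_add_cancel)
    have "NN y0 \<le> N" unfolding N_def using C' y0 by (intro member_le_sum) auto
    then obtain d where "N = d + NN y0" by (metis le_add_diff_inverse2)
    hence "(stepf S ^^ N) y' = (stepf S ^^ d) ((stepf S ^^ NN y0) y')" by (simp add: funpow_add)
    hence i2: "(stepf S ^^ N) y' \<in> interior K" using stepf_int_p4[OF S(1,4) i1] by simp
    have "y = norm y *\<^sub>R y'" unfolding y'_def using y by simp
    hence "(stepf S ^^ N) y = norm y *\<^sub>R (stepf S ^^ N) y'"
      using linear_scale[OF bounded_linear.linear[OF stepf_bl]] by metis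
    thus ?thesis using int_scale_p4[OF i2] y by simp
  qed
  have "\<not> ((\<lambda>x. (\<Sum>S) *v x) ` F \<subseteq> F)" if F: "nontrivial_face K F" for F
  proof
    assume inv: "(\<lambda>x. (\<Sum>S) *v x) ` F \<subseteq> F"
    have fF: "face_of_cone K F" using F unfolding nontrivial_face_def by blast
    note fp = face_props_p4[OF fF]
    obtain x where x: "x \<in> F" "x \<noteq> 0" using F fp(2) unfolding nontrivial_face_def by blast
    have "(stepf S ^^ k) x \<in> F" for k
    proof (induction k)
      case 0 thus ?case using x by simp
    next
      case (Suc k) thus ?case using inv fp(4) unfolding stepf_def by auto
    qed
    moreover have "(stepf S ^^ N) x \<in> interior K" using good x fp(1) by blast
    ultimately have "F = K" using face_int_p4[OF fF] by blast
    thus False using F unfolding nontrivial_face_def by blast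
  qed
  thus ?thesis using S by blast
qed

end


definition l1m :: "real^'n^'m \<Rightarrow> real" where
  "l1m M = (\<Sum>i\<in>UNIV. \<Sum>j\<in>UNIV. \<bar>M$i$j\<bar>)"

lemma l1m_nonneg: "l1m M \<ge> 0" unfolding l1m_def by (intro sum_nonneg) auto

lemma norm_le_l1m: "norm M \<le> l1m M"
proof -
  have "norm M = L2_set (\<lambda>i. norm (M$i)) UNIV" by (simp add: norm_vec_def)
  also have "\<dots> \<le> (\<Sum>i\<in>UNIV. norm (M$i))" by (rule L2_set_le_sum) simp
  also have "\<dots> \<le> (\<Sum>i\<in>UNIV. \<Sum>j\<in>UNIV. \<bar>M$i$j\<bar>)" by (intro sum_mono norm_le_l1_cart)
  finally show ?thesis unfolding l1m_def .
qed

lemma l1m_mult: "l1m ((A::real^'n^'m) ** (B::real^'k^'n)) \<le> l1m A * l1m B"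
proof -
  have "l1m (A ** B) = (\<Sum>i\<in>UNIV. \<Sum>j\<in>UNIV. \<bar>\<Sum>k\<in>UNIV. A$i$k * B$k$j\<bar>)"
    unfolding l1m_def by (simp add: matrix_matrix_mult_def)
  also have "\<dots> \<le> (\<Sum>i\<in>UNIV. \<Sum>j\<in>UNIV. \<Sum>k\<in>UNIV. \<bar>A$i$k\<bar> * \<bar>B$k$j\<bar>)"
    by (intro sum_mono) (auto intro: order_trans[OF sum_abs] simp: abs_mult)
  also have "\<dots> = (\<Sum>i\<in>UNIV. \<Sum>k\<in>UNIV. \<bar>A$i$k\<bar> * (\<Sum>j\<in>UNIV. \<bar>B$k$j\<bar>))"
    by (simp add: sum.swap[of _ "UNIV::'k set"] sum_distrib_left)
  also have "\<dots> \<le> (\<Sum>i\<in>UNIV. \<Sum>k\<in>UNIV. \<bar>A$i$k\<bar> * l1m B)"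
  proof (intro sum_mono mult_left_mono)
    fix k show "(\<Sum>j\<in>UNIV. \<bar>B$k$j\<bar>) \<le> l1m B"
      unfolding l1m_def by (rule member_le_sum) (auto intro: sum_nonneg)
  qed auto
  also have "\<dots> = l1m A * l1m B" unfolding l1m_def by (simp add: sum_distrib_right)
  finally show ?thesis .
qed

lemma mat_pow_0[simp]: "mat_pow A 0 = mat 1" unfolding mat_pow_def by simp
lemma mat_pow_Suc: "mat_pow A (Suc k) = A ** mat_pow A k" unfolding mat_pow_def by simp

lemma l1m_pow: "l1m (mat_pow A k) \<le> l1m (mat 1 :: real^'n^'n) * l1m A ^ k"
  for A :: "real^'n^'n"
proof (induction k)
  case 0 thus ?case by simp
next
  case (Suc k)
  have "l1m (mat_pow A (Suc k)) \<le> l1m A * l1m (mat_pow A k)" unfolding mat_pow_Suc by (rule l1m_mult)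
  also have "\<dots> \<le> l1m A * (l1m (mat 1 :: real^'n^'n) * l1m A ^ k)"
    by (intro mult_left_mono Suc l1m_nonneg)
  finally show ?case by (simp add: ac_simps)
qed

lemma summable_norm_exp_terms:
  fixes A :: "real^'n^'n"
  shows "summable (\<lambda>k. norm ((1 / fact k) *\<^sub>R mat_pow A k))"
proof (rule summable_comparison_test)
  show "summable (\<lambda>k. l1m (mat 1 :: real^'n^'n) * (inverse (fact k) * l1m A ^ k))"
    by (intro summable_mult summable_exp)
  show "\<exists>N. \<forall>n\<ge>N. norm (norm ((1 / fact n) *\<^sub>R mat_pow A n)) \<le> l1m (mat 1 :: real^'n^'n) * (inverse (fact n) * l1m A ^ n)"
  proof (intro exI allI impI)
    fix n :: nat
    have "norm ((1 / fact n) *\<^sub>R mat_pow A n) = inverse (fact n) * norm (mat_pow A n)"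
      by (simp add: divide_inverse)
    also have "\<dots> \<le> inverse (fact n) * (l1m (mat 1 :: real^'n^'n) * l1m A ^ n)"
      by (intro mult_left_mono order_trans[OF norm_le_l1m l1m_pow]) auto
    finally show "norm (norm ((1 / fact n) *\<^sub>R mat_pow A n)) \<le> l1m (mat 1 :: real^'n^'n) * (inverse (fact n) * l1m A ^ n)"
      by (simp add: ac_simps)
  qed
qed

lemma bl_mv: "bounded_linear (\<lambda>M::real^'n^'m. M *v x)"
proof -
  have "linear (\<lambda>M::real^'n^'m. M *v x)"
    by (rule linearI) (auto simp: matrix_vector_mult_add_rdistrib scaleR_matrix_vector_assoc)
  thus ?thesis by (simp add: linear_conv_bounded_linear)
qed

lemma mat_exp_apply:
  fixes A :: "real^'n^'n"
  shows "summable (\<lambda>k. (1 / fact k) *\<^sub>R (mat_pow A k *v x))"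
    "mat_exp A *v x = (\<Sum>k. (1 / fact k) *\<^sub>R (mat_pow A k *v x))"
proof -
  have s: "summable (\<lambda>k. (1 / fact k) *\<^sub>R mat_pow A k)"
    by (rule summable_norm_cancel[OF summable_norm_exp_terms])
  have "mat_exp A *v x = (\<Sum>k. ((1 / fact k) *\<^sub>R mat_pow A k) *v x)"
    unfolding mat_exp_def by (rule bounded_linear.suminf[OF bl_mv s])
  thus "mat_exp A *v x = (\<Sum>k. (1 / fact k) *\<^sub>R (mat_pow A k *v x))"
    by (simp add: scaleR_matrix_vector_assoc)
  have "summable (\<lambda>k. ((1 / fact k) *\<^sub>R mat_pow A k) *v x)"
    by (rule bounded_linear.summable[OF bl_mv s])
  thus "summable (\<lambda>k. (1 / fact k) *\<^sub>R (mat_pow A k *v x))"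
    by (simp add: scaleR_matrix_vector_assoc)
qed


lemma mv_sum_right: "finite S \<Longrightarrow> (A::real^'n^'m) *v (sum f S) = sum (\<lambda>i. A *v f i) S"
  by (induction S rule: finite_induct) (auto simp: matrix_vector_right_distrib)

lemma binom_vec:
  fixes C :: "real^'n^'n" and x :: "real^'n"
  shows "mat_pow (\<mu> *\<^sub>R mat 1 + C) k *v x
     = (\<Sum>i\<le>k. (real (k choose i) * \<mu>^i) *\<^sub>R (mat_pow C (k - i) *v x))"
proof (induction k)
  case 0 thus ?case by simp
next
  case (Suc k)
  define u where "u j = mat_pow C j *v x" for j
  define c where "c k i = real (k choose i)" for k i
  have Cu: "C *v u j = u (Suc j)" for j unfolding u_def mat_pow_Suc by (simp add: matrix_vector_mul_assoc)
  define w where "w = mat_pow (\<mu> *\<^sub>R mat 1 + C) k *v x"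
  have "mat_pow (\<mu> *\<^sub>R mat 1 + C) (Suc k) *v x = \<mu> *\<^sub>R w + C *v w"
    unfolding w_def mat_pow_Suc
    by (simp add: matrix_vector_mul_assoc[symmetric] matrix_vector_mult_add_rdistrib
        scaleR_matrix_vector_assoc[symmetric])
  also have "w = (\<Sum>i\<le>k. (c k i * \<mu>^i) *\<^sub>R u (k - i))" unfolding w_def Suc u_def c_def ..
  also have "C *v (\<Sum>i\<le>k. (c k i * \<mu>^i) *\<^sub>R u (k - i)) = (\<Sum>i\<le>k. (c k i * \<mu>^i) *\<^sub>R u (Suc k - i))"
    by (simp add: mv_sum_right matrix_scaleR_vector_ac Cu Suc_diff_le scaleR_matrix_vector_assoc[symmetric])
  also have "(\<Sum>i\<le>k. (c k i * \<mu>^i) *\<^sub>R u (Suc k - i)) = (\<Sum>i\<le>Suc k. (c k i * \<mu>^i) *\<^sub>R u (Suc k - i))"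
    by (simp add: c_def)
  also have "\<dots> = u (Suc k) + (\<Sum>i\<le>k. (c k (Suc i) * \<mu>^Suc i) *\<^sub>R u (k - i))"
    by (subst sum.atMost_Suc_shift) (simp add: c_def)
  also have "\<mu> *\<^sub>R (\<Sum>i\<le>k. (c k i * \<mu>^i) *\<^sub>R u (k - i)) = (\<Sum>i\<le>k. (c k i * \<mu>^Suc i) *\<^sub>R u (k - i))"
    by (simp add: scaleR_sum_right mult_ac)
  also have "(\<Sum>i\<le>k. (c k i * \<mu>^Suc i) *\<^sub>R u (k - i)) + (u (Suc k) + (\<Sum>i\<le>k. (c k (Suc i) * \<mu>^Suc i) *\<^sub>R u (k - i)))
      = u (Suc k) + (\<Sum>i\<le>k. (c (Suc k) (Suc i) * \<mu>^Suc i) *\<^sub>R u (k - i))"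
  proof -
    have e: "(c (Suc k) (Suc i) * \<mu>^Suc i) *\<^sub>R u (k - i) = (c k i * \<mu>^Suc i) *\<^sub>R u (k - i) + (c k (Suc i) * \<mu>^Suc i) *\<^sub>R u (k - i)" for i
      by (simp only: c_def binomial_Suc_Suc of_nat_add distrib_right scaleR_add_left)
    show ?thesis by (simp only: e sum.distrib add_ac)
  qed
  also have "\<dots> = (\<Sum>i\<le>Suc k. (c (Suc k) i * \<mu>^i) *\<^sub>R u (Suc k - i))"
    by (subst sum.atMost_Suc_shift) (simp add: c_def)
  finally show ?case unfolding u_def c_def .
qed


lemma exp_shift:
  fixes C :: "real^'n^'n" and x :: "real^'n"
  shows "mat_exp (\<mu> *\<^sub>R mat 1 + C) *v x = exp \<mu> *\<^sub>R (\<Sum>j. (1 / fact j) *\<^sub>R (mat_pow C j *v x))"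
proof -
  define b where "b j = (1 / fact j) *\<^sub>R (mat_pow C j *v x)" for j
  define a where "a i = \<mu>^i / fact i" for i
  have sb: "summable b" unfolding b_def by (rule mat_exp_apply(1))
  obtain Kb where Kb: "\<And>M::real^'n^'n. norm (M *v x) \<le> norm M * Kb"
    using bounded_linear.bounded[OF bl_mv] by blast
  have snb: "summable (\<lambda>j. norm (b j))"
  proof (rule summable_comparison_test)
    show "summable (\<lambda>j. norm ((1 / fact j) *\<^sub>R mat_pow C j) * Kb)"
      by (intro summable_mult2 summable_norm_exp_terms)
    show "\<exists>N. \<forall>n\<ge>N. norm (norm (b n)) \<le> norm ((1 / fact n) *\<^sub>R mat_pow C n) * Kb"
    proof (intro exI allI impI)
      fix n :: nat
      have "b n = ((1 / fact n) *\<^sub>R mat_pow C n) *v x" unfolding b_def by (simp add: scaleR_matrix_vector_assoc)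
      hence "norm (b n) \<le> norm ((1 / fact n) *\<^sub>R mat_pow C n) * Kb" by (simp only: Kb)
      thus "norm (norm (b n)) \<le> norm ((1 / fact n) *\<^sub>R mat_pow C n) * Kb" by (simp only: real_norm_def abs_norm_cancel)
    qed
  qed
  have snbl: "summable (\<lambda>j. norm (b j $ l))" for l
  proof (rule summable_comparison_test[OF _ snb])
    show "\<exists>N. \<forall>n\<ge>N. norm (norm (b n $ l)) \<le> norm (b n)" using component_le_norm_cart by auto
  qed
  have sna: "summable (\<lambda>i. norm (a i))"
  proof -
    have "summable (\<lambda>i. inverse (fact i) * \<bar>\<mu>\<bar>^i)" by (rule summable_exp)
    moreover have "norm (a i) = inverse (fact i) * \<bar>\<mu>\<bar>^i" for i
      unfolding a_def by (simp add: power_abs divide_inverse abs_mult mult_ac)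
    ultimately show ?thesis by simp
  qed
  have ea: "exp \<mu> = (\<Sum>i. a i)" unfolding a_def exp_def by (simp add: divide_inverse mult_ac)
  have sD: "summable (\<lambda>k. (1 / fact k) *\<^sub>R (mat_pow (\<mu> *\<^sub>R mat 1 + C) k *v x))"
    by (rule mat_exp_apply(1))
  show ?thesis
  proof (subst vec_eq_iff, intro allI)
    fix l
    have "(mat_exp (\<mu> *\<^sub>R mat 1 + C) *v x) $ l = (\<Sum>k. ((1 / fact k) *\<^sub>R (mat_pow (\<mu> *\<^sub>R mat 1 + C) k *v x)) $ l)"
      unfolding mat_exp_apply(2) by (rule bounded_linear.suminf[OF bounded_linear_vec_nth sD])
    also have "\<dots> = (\<Sum>k. \<Sum>i\<le>k. a i * (b (k - i) $ l))"
    proof (rule arg_cong[where f=suminf], rule ext)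
      fix k
      have "((1 / fact k) *\<^sub>R (mat_pow (\<mu> *\<^sub>R mat 1 + C) k *v x)) $ l
          = (\<Sum>i\<le>k. (1 / fact k) * (real (k choose i) * \<mu>^i) * (mat_pow C (k - i) *v x) $ l)"
        unfolding binom_vec by (simp add: sum_distrib_left mult_ac)
      also have "\<dots> = (\<Sum>i\<le>k. a i * (b (k - i) $ l))"
      proof (rule sum.cong[OF refl])
        fix i assume "i \<in> {..k}"
        hence ik: "i \<le> k" by simp
        have "(1 / fact k) * real (k choose i) = 1 / (fact i * fact (k - i))"
          using binomial_fact[OF ik, where 'a=real] by simp
        thus "(1 / fact k) * (real (k choose i) * \<mu>^i) * (mat_pow C (k - i) *v x) $ l = a i * (b (k - i) $ l)"
          using ik unfolding a_def b_def by (simp add: field_simps)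
      qed
      finally show "((1 / fact k) *\<^sub>R (mat_pow (\<mu> *\<^sub>R mat 1 + C) k *v x)) $ l = (\<Sum>i\<le>k. a i * (b (k - i) $ l))" .
    qed
    also have "\<dots> = (\<Sum>i. a i) * (\<Sum>j. b j $ l)"
      by (rule Cauchy_product[OF sna snbl, symmetric])
    also have "(\<Sum>j. b j $ l) = (\<Sum>j. b j) $ l"
      by (rule bounded_linear.suminf[OF bounded_linear_vec_nth sb, symmetric])
    finally show "(mat_exp (\<mu> *\<^sub>R mat 1 + C) *v x) $ l = (exp \<mu> *\<^sub>R (\<Sum>j. (1 / fact j) *\<^sub>R (mat_pow C j *v x))) $ l"
      unfolding ea b_def by simp
  qed
qed


lemma avg_hull:
  assumes "finite S" "S \<noteq> {}" "S \<subseteq> M"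
  shows "(1 / real (card S)) *\<^sub>R (\<Sum>S) \<in> convex hull M"
proof -
  have "(\<Sum>A\<in>S. (1 / real (card S)) *\<^sub>R A) \<in> convex hull M"
    using assms hull_subset[of M convex]
    by (intro convex_sum) (auto simp: card_gt_0_iff)
  thus ?thesis by (simp add: scaleR_sum_right)
qed

context fixes K :: "(real^'n) set" assumes pc: "proper_cone K"
begin

lemmas K0_p8 = K0[OF pc] and Kadd_p8 = Kadd[OF pc] and Ksc_p8 = Ksc[OF pc] and Ksum_p8 = Ksum[OF pc]
  and piK_sum_p8 = piK_sum[OF pc] and face_props_p8 = face_props[OF pc] and face_span_p8 = face_span[OF pc]
  and Kclosed_p8 = Kclosed[OF pc] and core_p8 = core[OF pc]

lemma mat_pow_K: "P \<in> pi_cone K \<Longrightarrow> x \<in> K \<Longrightarrow> mat_pow P j *v x \<in> K"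
proof (induction j)
  case 0 thus ?case by simp
next
  case (Suc j) thus ?case unfolding mat_pow_Suc pi_cone_def by (simp add: matrix_vector_mul_assoc[symmetric])
qed

lemma pi_scale: "P \<in> pi_cone K \<Longrightarrow> t \<ge> 0 \<Longrightarrow> t *\<^sub>R P \<in> pi_cone K"
  unfolding pi_cone_def by (auto simp: scaleR_matrix_vector_assoc[symmetric] intro: Ksc_p8)

lemma exp_nonneg: assumes P: "P \<in> pi_cone K" shows "exp_K_nonneg K (P + l *\<^sub>R mat 1)"
  unfolding exp_K_nonneg_def
proof (intro allI impI ballI)
  fix t :: real and x assume t: "t \<ge> 0" and x: "x \<in> K"
  have e: "t *\<^sub>R (P + l *\<^sub>R mat 1) = (t * l) *\<^sub>R mat 1 + t *\<^sub>R P" by (simp add: algebra_simps)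
  have tP: "t *\<^sub>R P \<in> pi_cone K" by (rule pi_scale[OF P t])
  define b where "b j = (1 / fact j) *\<^sub>R (mat_pow (t *\<^sub>R P) j *v x)" for j
  have bK: "b j \<in> K" for j unfolding b_def by (intro Ksc_p8 mat_pow_K[OF tP x]) simp
  have sb: "summable b" unfolding b_def by (rule mat_exp_apply(1))
  have "suminf b \<in> K"
    by (rule closed_sequentially[OF Kclosed_p8 _ summable_LIMSEQ[OF sb]]) (intro Ksum_p8 bK finite_lessThan)
  thus "mat_exp (t *\<^sub>R (P + l *\<^sub>R mat 1)) *v x \<in> K"
    unfolding e exp_shift b_def[symmetric] by (intro Ksc_p8) auto
qed

lemma span_inv:
  fixes B :: "real^'n^'n"
  assumes "(\<lambda>x. B *v x) ` F \<subseteq> F" "y \<in> span F"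
  shows "B *v y \<in> span F"
proof -
  have "subspace {y. B *v y \<in> span F}"
    unfolding subspace_def
    by (auto simp: matrix_vector_right_distrib matrix_vector_mult_scaleR span_add span_scale span_zero)
  moreover have "F \<subseteq> {y. B *v y \<in> span F}" using assms(1) span_base by blast
  ultimately show ?thesis using assms(2) span_minimal by blast
qed

end


theorem mainTheorem4:
  fixes K :: "(real^'n) set"
  assumes "proper_cone K"
  shows "(\<forall>M. M \<noteq> {} \<and> M \<subseteq> pi_cone K \<longrightarrow>
            ((\<exists>A\<in>convex hull M. K_irreducible K A) \<longleftrightarrow>
             (\<forall>F. nontrivial_face K F \<longrightarrow> (\<exists>A\<in>M. \<not> ((\<lambda>x. A *v x) ` F \<subseteq> F)))))
       \<and> (\<forall>M. M \<noteq> {} \<and> M \<subseteq> {P + L | P L. P \<in> pi_cone K \<and> L \<in> Lambda_scalar} \<and> bounded M \<longrightarrow>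
            ((\<exists>A\<in>convex hull M. exp_K_nonneg K A \<and>
                 (\<forall>F. nontrivial_face K F \<longrightarrow> \<not> ((\<lambda>x. A *v x) ` span F \<subseteq> span F))) \<longleftrightarrow>
             (\<forall>F. nontrivial_face K F \<longrightarrow> (\<exists>A\<in>M. \<not> ((\<lambda>x. A *v x) ` span F \<subseteq> span F)))))"
proof -
  note pc = assms
  note fp = face_props[OF pc]
  have conv_inv: "convex {B::real^'n^'n. (\<lambda>x. B *v x) ` F \<subseteq> F}" if F: "face_of_cone K F" for F
    unfolding convex_def
  proof (intro ballI allI impI)
    fix B1 B2 :: "real^'n^'n" and u v :: real
    assume B: "B1 \<in> {B. (\<lambda>x. B *v x) ` F \<subseteq> F}" "B2 \<in> {B. (\<lambda>x. B *v x) ` F \<subseteq> F}"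
      and uv: "0 \<le> u" "0 \<le> v" "u + v = 1"
    have cF: "convex F" using F unfolding face_of_cone_def by blast
    show "u *\<^sub>R B1 + v *\<^sub>R B2 \<in> {B. (\<lambda>x. B *v x) ` F \<subseteq> F}"
    proof (clarsimp)
      fix x assume x: "x \<in> F"
      have "u *\<^sub>R (B1 *v x) + v *\<^sub>R (B2 *v x) \<in> F" using cF B x uv unfolding convex_def by blast
      thus "(u *\<^sub>R B1 + v *\<^sub>R B2) *v x \<in> F"
        by (simp add: matrix_vector_mult_add_rdistrib scaleR_matrix_vector_assoc)
    qed
  qed
  have conv_sinv: "convex {B::real^'n^'n. (\<lambda>x. B *v x) ` span F \<subseteq> span F}" for F :: "(real^'n) set"
    unfolding convex_def
    by (auto simp: matrix_vector_mult_add_rdistrib scaleR_matrix_vector_assoc[symmetric]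
        intro!: span_add span_scale)
  have part1: "(\<exists>A\<in>convex hull M. K_irreducible K A) \<longleftrightarrow>
             (\<forall>F. nontrivial_face K F \<longrightarrow> (\<exists>A\<in>M. \<not> ((\<lambda>x. A *v x) ` F \<subseteq> F)))"
    if M: "M \<noteq> {}" "M \<subseteq> pi_cone K" for M
  proof
    assume "\<exists>A\<in>convex hull M. K_irreducible K A"
    then obtain A where A: "A \<in> convex hull M" "K_irreducible K A" by blast
    show "\<forall>F. nontrivial_face K F \<longrightarrow> (\<exists>A\<in>M. \<not> ((\<lambda>x. A *v x) ` F \<subseteq> F))"
    proof (intro allI impI, rule ccontr)
      fix F assume F: "nontrivial_face K F" and n: "\<not> (\<exists>A\<in>M. \<not> ((\<lambda>x. A *v x) ` F \<subseteq> F))"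
      have "M \<subseteq> {B. (\<lambda>x. B *v x) ` F \<subseteq> F}" using n by blast
      hence "convex hull M \<subseteq> {B. (\<lambda>x. B *v x) ` F \<subseteq> F}"
        using conv_inv F unfolding nontrivial_face_def by (intro hull_minimal) auto
      hence "(\<lambda>x. A *v x) ` F \<subseteq> F" using A(1) by blast
      thus False using A(2) F unfolding K_irreducible_def by blast
    qed
  next
    assume H: "\<forall>F. nontrivial_face K F \<longrightarrow> (\<exists>A\<in>M. \<not> ((\<lambda>x. A *v x) ` F \<subseteq> F))"
    obtain S where S: "finite S" "S \<noteq> {}" "S \<subseteq> M"
      and irr: "\<forall>F. nontrivial_face K F \<longrightarrow> \<not> ((\<lambda>x. (\<Sum>S) *v x) ` F \<subseteq> F)"
      using core[OF pc M(2,1) H] by blast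
    define A where "A = (1 / real (card S)) *\<^sub>R (\<Sum>S)"
    have Ah: "A \<in> convex hull M" unfolding A_def using avg_hull[OF S] .
    have cS: "real (card S) > 0" using S by (simp add: card_gt_0_iff)
    have Api: "A \<in> pi_cone K" unfolding A_def
      using pi_scale[OF pc piK_sum[OF pc S(1) order_trans[OF S(3) M(2)]], of "1 / real (card S)"] cS by simp
    have "\<not> ((\<lambda>x. A *v x) ` F \<subseteq> F)" if F: "nontrivial_face K F" for F
    proof
      assume inv: "(\<lambda>x. A *v x) ` F \<subseteq> F"
      have fF: "face_of_cone K F" using F unfolding nontrivial_face_def by blast
      have "(\<lambda>x. (\<Sum>S) *v x) ` F \<subseteq> F"
      proof clarsimp
        fix x assume x: "x \<in> F"
        have "(\<Sum>S) = real (card S) *\<^sub>R A" unfolding A_def using cS by simp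
        hence "(\<Sum>S) *v x = real (card S) *\<^sub>R (A *v x)" by (simp add: scaleR_matrix_vector_assoc)
        thus "(\<Sum>S) *v x \<in> F" using fp(3)[OF fF, of "A *v x" "real (card S)"] inv x cS by auto
      qed
      thus False using irr F by blast
    qed
    hence "K_irreducible K A" unfolding K_irreducible_def using Api by blast
    thus "\<exists>A\<in>convex hull M. K_irreducible K A" using Ah by blast
  qed
  have part2: "(\<exists>A\<in>convex hull M. exp_K_nonneg K A \<and>
                 (\<forall>F. nontrivial_face K F \<longrightarrow> \<not> ((\<lambda>x. A *v x) ` span F \<subseteq> span F))) \<longleftrightarrow>
             (\<forall>F. nontrivial_face K F \<longrightarrow> (\<exists>A\<in>M. \<not> ((\<lambda>x. A *v x) ` span F \<subseteq> span F)))"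
    if M: "M \<noteq> {}" "M \<subseteq> {P + L | P L. P \<in> pi_cone K \<and> L \<in> Lambda_scalar}" for M
  proof
    assume "\<exists>A\<in>convex hull M. exp_K_nonneg K A \<and>
                 (\<forall>F. nontrivial_face K F \<longrightarrow> \<not> ((\<lambda>x. A *v x) ` span F \<subseteq> span F))"
    then obtain A where A: "A \<in> convex hull M" "\<forall>F. nontrivial_face K F \<longrightarrow> \<not> ((\<lambda>x. A *v x) ` span F \<subseteq> span F)" by blast
    show "\<forall>F. nontrivial_face K F \<longrightarrow> (\<exists>A\<in>M. \<not> ((\<lambda>x. A *v x) ` span F \<subseteq> span F))"
    proof (intro allI impI, rule ccontr)
      fix F assume F: "nontrivial_face K F" and n: "\<not> (\<exists>A\<in>M. \<not> ((\<lambda>x. A *v x) ` span F \<subseteq> span F))"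
      have "M \<subseteq> {B. (\<lambda>x. B *v x) ` span F \<subseteq> span F}" using n by blast
      hence "convex hull M \<subseteq> {B. (\<lambda>x. B *v x) ` span F \<subseteq> span F}"
        using conv_sinv by (intro hull_minimal) auto
      hence "(\<lambda>x. A *v x) ` span F \<subseteq> span F" using A(1) by blast
      thus False using A(2) F by blast
    qed
  next
    assume H: "\<forall>F. nontrivial_face K F \<longrightarrow> (\<exists>A\<in>M. \<not> ((\<lambda>x. A *v x) ` span F \<subseteq> span F))"
    have "\<forall>A\<in>M. \<exists>p. fst p \<in> pi_cone K \<and> A = fst p + snd p *\<^sub>R mat 1"
    proof
      fix A assume "A \<in> M"
      then obtain P L where "A = P + L" "P \<in> pi_cone K" "L \<in> Lambda_scalar" using M(2) by blast
      then obtain l where "A = P + l *\<^sub>R mat 1" "P \<in> pi_cone K" unfolding Lambda_scalar_def by blast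
      thus "\<exists>p. fst p \<in> pi_cone K \<and> A = fst p + snd p *\<^sub>R mat 1" by (intro exI[of _ "(P, l)"]) simp
    qed
    then obtain g where g: "\<forall>A\<in>M. fst (g A) \<in> pi_cone K \<and> A = fst (g A) + snd (g A) *\<^sub>R mat 1"
      by (rule bchoice[elim_format]) blast
    define PP where "PP A = fst (g A)" for A
    define ll where "ll A = snd (g A)" for A
    have PP: "\<And>A. A \<in> M \<Longrightarrow> PP A \<in> pi_cone K" and Aeq: "\<And>A. A \<in> M \<Longrightarrow> A = PP A + ll A *\<^sub>R mat 1"
      using g unfolding PP_def ll_def by auto
    have M'1: "PP ` M \<subseteq> pi_cone K" using PP by blast
    have M'2: "PP ` M \<noteq> {}" using M(1) by blast
    have H': "\<forall>F. nontrivial_face K F \<longrightarrow> (\<exists>B\<in>PP ` M. \<not> ((\<lambda>x. B *v x) ` F \<subseteq> F))"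
    proof (intro allI impI)
      fix F assume F: "nontrivial_face K F"
      then obtain A where A: "A \<in> M" "\<not> ((\<lambda>x. A *v x) ` span F \<subseteq> span F)" using H by blast
      have "\<not> ((\<lambda>x. PP A *v x) ` F \<subseteq> F)"
      proof
        assume inv: "(\<lambda>x. PP A *v x) ` F \<subseteq> F"
        have "(\<lambda>x. A *v x) ` span F \<subseteq> span F"
        proof clarsimp
          fix y assume y: "y \<in> span F"
          have "PP A *v y \<in> span F" by (rule span_inv[OF pc inv y])
          moreover have "A *v y = PP A *v y + ll A *\<^sub>R y"
            by (subst Aeq[OF A(1)]) (simp add: matrix_vector_mult_add_rdistrib scaleR_matrix_vector_assoc[symmetric])
          ultimately show "A *v y \<in> span F" using y by (simp add: span_add span_scale)
        qed
        thus False using A(2) by blast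
      qed
      thus "\<exists>B\<in>PP ` M. \<not> ((\<lambda>x. B *v x) ` F \<subseteq> F)" using A(1) by blast
    qed
    obtain S' where S': "finite S'" "S' \<noteq> {}" "S' \<subseteq> PP ` M"
      and irr: "\<forall>F. nontrivial_face K F \<longrightarrow> \<not> ((\<lambda>x. (\<Sum>S') *v x) ` F \<subseteq> F)"
      using core[OF pc M'1 M'2 H'] by blast
    obtain S where S0: "S \<subseteq> M" "inj_on PP S" "S' = PP ` S" using S'(3) subset_image_inj by metis
    have S: "finite S" "S \<noteq> {}" "S \<subseteq> M" using S0 S'(1,2) finite_image_iff by auto
    have sS': "(\<Sum>S') = (\<Sum>A\<in>S. PP A)" unfolding S0(3) using sum.reindex[OF S0(2), of "\<lambda>x. x"] by simp
    have sS: "(\<Sum>S) = (\<Sum>A\<in>S. PP A) + (\<Sum>A\<in>S. ll A) *\<^sub>R mat 1"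
    proof -
      have "(\<Sum>S) = (\<Sum>A\<in>S. PP A + ll A *\<^sub>R mat 1)" using Aeq S(3) by (intro sum.cong) auto
      thus ?thesis by (simp add: sum.distrib scaleR_sum_left)
    qed
    define A where "A = (1 / real (card S)) *\<^sub>R (\<Sum>S)"
    have Ah: "A \<in> convex hull M" unfolding A_def using avg_hull[OF S] .
    have cS: "real (card S) > 0" using S by (simp add: card_gt_0_iff)
    have Qpi: "(\<Sum>A\<in>S. PP A) \<in> pi_cone K"
      using piK_sum[OF pc, of "PP ` S"] S PP sS' S0(3) S'(1) by auto
    have Aform: "A = (1 / real (card S)) *\<^sub>R (\<Sum>A\<in>S. PP A) + ((1 / real (card S)) * (\<Sum>A\<in>S. ll A)) *\<^sub>R mat 1"
      unfolding A_def sS by (simp add: scaleR_add_right)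
    have ex: "exp_K_nonneg K A" unfolding Aform
      by (intro exp_nonneg[OF pc] pi_scale[OF pc Qpi]) (use cS in simp)
    have "\<not> ((\<lambda>x. A *v x) ` span F \<subseteq> span F)" if F: "nontrivial_face K F" for F
    proof
      assume inv: "(\<lambda>x. A *v x) ` span F \<subseteq> span F"
      have fF: "face_of_cone K F" using F unfolding nontrivial_face_def by blast
      have "(\<lambda>x. (\<Sum>S') *v x) ` F \<subseteq> F"
      proof clarsimp
        fix x assume x: "x \<in> F"
        have xs: "x \<in> span F" using x span_base by blast
        have "(\<Sum>S') = real (card S) *\<^sub>R A - (\<Sum>A\<in>S. ll A) *\<^sub>R mat 1"
          unfolding sS' A_def sS using cS by simp
        hence "(\<Sum>S') *v x = real (card S) *\<^sub>R (A *v x) - (\<Sum>A\<in>S. ll A) *\<^sub>R x"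
          by (simp add: matrix_vector_mult_diff_rdistrib scaleR_matrix_vector_assoc[symmetric])
        moreover have "A *v x \<in> span F" using inv xs by blast
        ultimately have "(\<Sum>S') *v x \<in> span F" using xs by (simp add: span_diff span_scale)
        moreover have "(\<Sum>S') *v x \<in> K" using Qpi sS' x fp(1)[OF fF] unfolding pi_cone_def by auto
        ultimately show "(\<Sum>S') *v x \<in> F" using face_span[OF pc fF] by blast
      qed
      thus False using irr F by blast
    qed
    thus "\<exists>A\<in>convex hull M. exp_K_nonneg K A \<and>
                 (\<forall>F. nontrivial_face K F \<longrightarrow> \<not> ((\<lambda>x. A *v x) ` span F \<subseteq> span F))"
      using Ah ex by blast
  qed
  show ?thesis
    apply (intro conjI allI impI)
     apply (erule conjE, rule part1; assumption)
    apply (elim conjE, rule part2; assumption)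
    done
qed


end
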